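(* For every abstract storage device $D$, $\sigma(D)\le i(D)\cdot C(D)$.
   Context: An abstract storage device (ASD) is a pair $D=(\mathcal{S}_D,\mathcal{P}_D)$, $\mathcal{S}_D$ a finite set and $\mathcal{P}_D$ a finite family of partitions of $\mathcal{S}_D$. For a partition $\pi$ of $\mathcal{S}'$ and $\phi:\mathcal{S}\to\mathcal{S}'$, $\pi\circ\phi$ is the partition of $\mathcal{S}$ with $x,y$ in the same block iff $\phi(x),\phi(y)$ are in the same block of $\pi$; $\pi\preceq\rho$ means every block of $\pi$ lies in a block of $\rho$; $\wedge$ is the meet of partitions. $D\le D'$ means there exist $\phi:\mathcal{S}_D\to\mathcal{S}_{D'}$, $\alpha:\mathcal{P}_D\to\mathcal{P}_{D'}$ with $\alpha(\pi)\circ\phi\preceq\pi$ for all $\pi\in\mathcal{P}_D$; $D\equiv D'$ means $D\le D'$ and $D'\le D$. $C_m$ is the ASD with state space $\{1,\dots,m\}$ and partition set $\{\{\{1\},\dots,\{m\}\}\}$. Storage capacity: $C(D)=\max\{\log m: C_m\le D\}$ (log base 2). State complexity: $\sigma(D)=\min_{E\equiv D}\log|\mathcal{S}_E|$. $D$ is perfect if $\{\{s\}:s\in\mathcal{S}_D\}\in\mathcal{P}_D$; $D^{(k)}$ has state space $\mathcal{S}_D$ and partition set $\{\pi_1\wedge\cdots\wedge\pi_k:\pi_i\in\mathcal{P}_D\}$; the perfectness index $i(D)$ is the least $k\ge1$ with $D^{(k)}$ perfect, or $\infty$ if none exists. *)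

theory Defs
  imports "HOL-Library.Disjoint_Sets" "HOL-Library.Extended_Real"
begin

text \<open>An abstract storage device: a state space together with a family of partitions of it.
  A partition is represented as its set of blocks.\<close>

type_synonym 's asd = "'s set \<times> 's set set set"

definition states :: "'s asd \<Rightarrow> 's set" where "states D = fst D"
definition parts :: "'s asd \<Rightarrow> 's set set set" where "parts D = snd D"

definition is_asd :: "'s asd \<Rightarrow> bool" where
  "is_asd D \<longleftrightarrow> finite (states D) \<and> finite (parts D) \<and>
     (\<forall>\<pi>\<in>parts D. partition_on (states D) \<pi>)"

definition pullback :: "'a set \<Rightarrow> ('a \<Rightarrow> 'b) \<Rightarrow> 'b set set \<Rightarrow> 'a set set" where
  "pullback S \<phi> \<pi> = (\<lambda>B. {x\<in>S. \<phi> x \<in> B}) ` \<pi> - {{}}"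

definition refines :: "'a set set \<Rightarrow> 'a set set \<Rightarrow> bool" (infix "\<preceq>\<^sub>P" 50) where
  "\<pi> \<preceq>\<^sub>P \<rho> \<longleftrightarrow> (\<forall>B\<in>\<pi>. \<exists>B'\<in>\<rho>. B \<subseteq> B')"

definition meet :: "'a set set \<Rightarrow> 'a set set \<Rightarrow> 'a set set" where
  "meet \<pi> \<rho> = {B \<inter> B' | B B'. B \<in> \<pi> \<and> B' \<in> \<rho>} - {{}}"

definition asd_le :: "'s asd \<Rightarrow> 't asd \<Rightarrow> bool" where
  "asd_le D D' \<longleftrightarrow> (\<exists>\<phi> \<alpha>. \<phi> \<in> states D \<rightarrow> states D' \<and>
     (\<forall>\<pi>\<in>parts D. \<alpha> \<pi> \<in> parts D' \<and> pullback (states D) \<phi> (\<alpha> \<pi>) \<preceq>\<^sub>P \<pi>))"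

definition asd_equiv :: "'s asd \<Rightarrow> 't asd \<Rightarrow> bool" where
  "asd_equiv D D' \<longleftrightarrow> asd_le D D' \<and> asd_le D' D"

definition Cdev :: "nat \<Rightarrow> nat asd" where
  "Cdev m = ({1..m}, {(\<lambda>i. {i}) ` {1..m}})"

definition capacity :: "'s asd \<Rightarrow> real" where
  "capacity D = Max {log 2 (real m) | m. m \<ge> 1 \<and> asd_le (Cdev m) D}"

text \<open>State complexity; competitor devices range over devices with states in \<open>nat\<close>
  (every finite state space can be relabelled into \<open>nat\<close>).\<close>
definition state_complexity :: "'s asd \<Rightarrow> real" where
  "state_complexity D =
     Inf {log 2 (real (card (states E))) | E :: nat asd. is_asd E \<and> asd_equiv E D}"

definition perfect :: "'s asd \<Rightarrow> bool" where
  "perfect D \<longleftrightarrow> (\<lambda>s. {s}) ` states D \<in> parts D"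

fun meet_list :: "'a set set list \<Rightarrow> 'a set set" where
  "meet_list [] = {}"
| "meet_list [\<pi>] = \<pi>"
| "meet_list (\<pi> # \<rho> # \<pi>s) = meet \<pi> (meet_list (\<rho> # \<pi>s))"

definition power_dev :: "'s asd \<Rightarrow> nat \<Rightarrow> 's asd" where
  "power_dev D k = (states D,
     {meet_list \<pi>s | \<pi>s. length \<pi>s = k \<and> set \<pi>s \<subseteq> parts D})"

definition perf_index :: "'s asd \<Rightarrow> ereal" where
  "perf_index D = (if \<exists>k\<ge>1. perfect (power_dev D k)
                    then ereal (real (LEAST k. k \<ge> 1 \<and> perfect (power_dev D k)))
                    else \<infinity>)"

end

theory Submission
  imports Defs
begin

lemma pullback_partition:
  assumes "partition_on S \<pi>" "\<phi> \<in> A \<rightarrow> S"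
  shows "partition_on A (pullback A \<phi> \<pi>)"
proof (rule partition_onI)
  show "\<Union> (pullback A \<phi> \<pi>) = A"
  proof
    show "\<Union> (pullback A \<phi> \<pi>) \<subseteq> A" unfolding pullback_def by auto
    show "A \<subseteq> \<Union> (pullback A \<phi> \<pi>)"
    proof
      fix x assume x: "x \<in> A"
      then have "\<phi> x \<in> S" using assms(2) by auto
      then obtain B where B: "B \<in> \<pi>" "\<phi> x \<in> B" using partition_onD1[OF assms(1)] by auto
      then have "{y\<in>A. \<phi> y \<in> B} \<in> pullback A \<phi> \<pi>" using x unfolding pullback_def by auto
      then show "x \<in> \<Union> (pullback A \<phi> \<pi>)" using x B by blast
    qed
  qed
  show "{} \<notin> pullback A \<phi> \<pi>" unfolding pullback_def by auto
  fix p q assume p: "p \<in> pullback A \<phi> \<pi>" and q: "q \<in> pullback A \<phi> \<pi>" and pq: "p \<noteq> q"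
  obtain B where B: "B \<in> \<pi>" "p = {y\<in>A. \<phi> y \<in> B}" using p unfolding pullback_def by auto
  obtain B' where B': "B' \<in> \<pi>" "q = {y\<in>A. \<phi> y \<in> B'}" using q unfolding pullback_def by auto
  have "B \<noteq> B'" using B B' pq by auto
  then have "disjnt B B'" using partition_onD2[OF assms(1)] B B' by (auto simp: pairwise_def)
  then show "disjnt p q" using B B' by (auto simp: disjnt_def)
qed

lemma relabel_equiv:
  fixes D :: "'s asd" and A :: "nat set"
  assumes asd: "is_asd D" and fA: "finite A" and \<phi>: "\<phi> \<in> A \<rightarrow> states D" and \<psi>: "\<psi> \<in> states D \<rightarrow> A"
    and ref: "\<forall>\<pi>\<in>parts D. pullback (states D) \<psi> (pullback A \<phi> \<pi>) \<preceq>\<^sub>P \<pi>"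
  shows "is_asd (A, pullback A \<phi> ` parts D) \<and> asd_equiv (A, pullback A \<phi> ` parts D) D"
proof -
  define E where "E = (A, pullback A \<phi> ` parts D)"
  have sE: "states E = A" and pE: "parts E = pullback A \<phi> ` parts D"
    by (auto simp: E_def states_def parts_def)
  have "is_asd E" unfolding is_asd_def sE pE using asd fA pullback_partition[OF _ \<phi>]
    by (auto simp: is_asd_def)
  moreover have "asd_le E D" unfolding asd_le_def sE pE
  proof (intro exI conjI ballI)
    show "\<phi> \<in> A \<rightarrow> states D" by fact
    fix \<rho> assume "\<rho> \<in> pullback A \<phi> ` parts D"
    then have ex: "\<exists>\<pi>\<in>parts D. \<rho> = pullback A \<phi> \<pi>" by auto
    define \<alpha> where "\<alpha> = (SOME \<pi>. \<pi> \<in> parts D \<and> \<rho> = pullback A \<phi> \<pi>)"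
    have "\<alpha> \<in> parts D \<and> \<rho> = pullback A \<phi> \<alpha>" unfolding \<alpha>_def using ex by (metis (mono_tags, lifting) someI_ex)
    then show "(\<lambda>\<rho>. SOME \<pi>. \<pi> \<in> parts D \<and> \<rho> = pullback A \<phi> \<pi>) \<rho> \<in> parts D"
      "pullback A \<phi> ((\<lambda>\<rho>. SOME \<pi>. \<pi> \<in> parts D \<and> \<rho> = pullback A \<phi> \<pi>) \<rho>) \<preceq>\<^sub>P \<rho>"
      unfolding \<alpha>_def by (auto simp: refines_def)
  qed
  moreover have "asd_le D E" unfolding asd_le_def sE pE
    using \<psi> ref by (intro exI[of _ \<psi>] exI[of _ "pullback A \<phi>"]) auto
  ultimately show ?thesis unfolding E_def asd_equiv_def by auto
qed

lemma sc_le: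
  fixes D :: "'s asd" and E :: "nat asd"
  assumes "is_asd E" "asd_equiv E D" "states D \<noteq> {}"
  shows "state_complexity D \<le> log 2 (real (card (states E)))"
proof -
  let ?X = "{log 2 (real (card (states E))) | E :: nat asd. is_asd E \<and> asd_equiv E D}"
  have "bdd_below ?X"
  proof (rule bdd_belowI)
    fix y assume "y \<in> ?X"
    then obtain E' :: "nat asd" where E': "is_asd E'" "asd_equiv E' D" "y = log 2 (real (card (states E')))" by auto
    then obtain \<phi> where "\<phi> \<in> states D \<rightarrow> states E'" unfolding asd_equiv_def asd_le_def by blast
    then have "states E' \<noteq> {}" using assms(3) by auto
    moreover have "finite (states E')" using E' by (simp add: is_asd_def)
    ultimately have "card (states E') \<ge> 1" by (simp add: Suc_leI card_gt_0_iff)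
    then show "0 \<le> y" using E' by simp
  qed
  moreover have "log 2 (real (card (states E))) \<in> ?X" using assms by blast
  ultimately show ?thesis unfolding state_complexity_def by (rule cInf_lower[rotated])
qed

lemma Cm_le_card:
  fixes D :: "'s asd"
  assumes asd: "is_asd D" and le: "asd_le (Cdev m) D"
  shows "m \<le> card (states D)"
proof -
  obtain \<phi> \<alpha> where \<phi>: "\<phi> \<in> {1..m} \<rightarrow> states D"
    and h: "\<forall>\<pi>\<in>{(\<lambda>i. {i}) ` {1..m}}. \<alpha> \<pi> \<in> parts D \<and> pullback {1..m} \<phi> (\<alpha> \<pi>) \<preceq>\<^sub>P \<pi>"
    using le unfolding asd_le_def Cdev_def states_def parts_def by auto
  let ?p = "\<alpha> ((\<lambda>i. {i}) ` {1..m})"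
  have p: "?p \<in> parts D" and r: "pullback {1..m} \<phi> ?p \<preceq>\<^sub>P (\<lambda>i. {i}) ` {1..m}" using h by auto
  have part: "partition_on (states D) ?p" using asd p by (auto simp: is_asd_def)
  have "inj_on \<phi> {1..m}"
  proof (rule inj_onI)
    fix i j assume i: "i \<in> {1..m}" and j: "j \<in> {1..m}" and e: "\<phi> i = \<phi> j"
    have "\<phi> i \<in> states D" using \<phi> i by auto
    then obtain B where B: "B \<in> ?p" "\<phi> i \<in> B" using partition_onD1[OF part] by auto
    have "{x\<in>{1..m}. \<phi> x \<in> B} \<in> pullback {1..m} \<phi> ?p" using B i unfolding pullback_def by auto
    then obtain l where "{x\<in>{1..m}. \<phi> x \<in> B} \<subseteq> {l}" using r unfolding refines_def by blast
    moreover have "i \<in> {x\<in>{1..m}. \<phi> x \<in> B}" "j \<in> {x\<in>{1..m}. \<phi> x \<in> B}" using i j e B by auto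
    ultimately show "i = j" by auto
  qed
  moreover have "\<phi> ` {1..m} \<subseteq> states D" using \<phi> by auto
  ultimately have "card {1..m} \<le> card (states D)"
    using asd by (intro card_inj_on_le) (auto simp: is_asd_def)
  then show ?thesis by simp
qed

lemma part_Cm:
  fixes D :: "'s asd"
  assumes asd: "is_asd D" and p: "\<pi> \<in> parts D"
  shows "asd_le (Cdev (card \<pi>)) D"
proof -
  have part: "partition_on (states D) \<pi>" using asd p by (auto simp: is_asd_def)
  have fin: "finite \<pi>" 
  proof (rule finite_subset)
    show "\<pi> \<subseteq> Pow (states D)" using partition_onD1[OF part] by auto
    show "finite (Pow (states D))" using asd by (simp add: is_asd_def)
  qed
  obtain g where g: "bij_betw g {1..card \<pi>} \<pi>" using ex_bij_betw_nat_finite_1[OF fin] by blast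
  define \<phi> where "\<phi> i = (SOME x. x \<in> g i)" for i
  have ne: "\<And>i. i \<in> {1..card \<pi>} \<Longrightarrow> \<phi> i \<in> g i"
  proof -
    fix i assume "i \<in> {1..card \<pi>}"
    then have "g i \<in> \<pi>" using g by (auto simp: bij_betw_def)
    then have "g i \<noteq> {}" using partition_onD3[OF part] by auto
    then show "\<phi> i \<in> g i" unfolding \<phi>_def by (simp add: some_in_eq)
  qed
  have "\<phi> \<in> {1..card \<pi>} \<rightarrow> states D"
  proof
    fix i assume i: "i \<in> {1..card \<pi>}"
    then have "g i \<in> \<pi>" using g by (auto simp: bij_betw_def)
    then show "\<phi> i \<in> states D" using ne[OF i] partition_onD1[OF part] by auto
  qed
  moreover have "pullback {1..card \<pi>} \<phi> \<pi> \<preceq>\<^sub>P (\<lambda>i. {i}) ` {1..card \<pi>}"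
    unfolding refines_def
  proof
    fix C assume "C \<in> pullback {1..card \<pi>} \<phi> \<pi>"
    then obtain B where B: "B \<in> \<pi>" "C = {x\<in>{1..card \<pi>}. \<phi> x \<in> B}" "C \<noteq> {}" unfolding pullback_def by auto
    have "B \<in> g ` {1..card \<pi>}" using g B(1) by (simp add: bij_betw_def)
    then obtain i where i: "i \<in> {1..card \<pi>}" "B = g i" by blast
    have "C \<subseteq> {i}"
    proof
      fix x assume x: "x \<in> C"
      then have x1: "x \<in> {1..card \<pi>}" "\<phi> x \<in> B" using B by auto
      have gx: "g x \<in> \<pi>" using g x1 by (auto simp: bij_betw_def)
      have "\<phi> x \<in> g x" using ne[OF x1(1)] .
      have "g x = B"
      proof (rule ccontr)
        assume "g x \<noteq> B"
        then have "disjnt (g x) B" using partition_onD2[OF part] gx B(1) by (simp add: pairwise_def)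
        then show False using \<open>\<phi> x \<in> g x\<close> x1(2) by (auto simp: disjnt_def)
      qed
      then have "g x = g i" using i(2) by simp
      then have "x = i" using inj_onD[OF bij_betw_imp_inj_on[OF g] _ x1(1) i(1)] by blast
      then show "x \<in> {i}" by simp
    qed
    then show "\<exists>B'\<in>(\<lambda>i. {i}) ` {1..card \<pi>}. C \<subseteq> B'" using i by blast
  qed
  ultimately show ?thesis unfolding asd_le_def
    using p by (intro exI[of _ \<phi>] exI[of _ "\<lambda>_. \<pi>"]) (simp add: Cdev_def states_def parts_def)
qed

lemma meet_list_card:
  assumes "\<pi>s \<noteq> []" "\<forall>\<pi>\<in>set \<pi>s. finite \<pi> \<and> card \<pi> \<le> M"
  shows "finite (meet_list \<pi>s) \<and> card (meet_list \<pi>s) \<le> M ^ length \<pi>s"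
  using assms
proof (induction \<pi>s rule: meet_list.induct)
  case 1
  then show ?case by simp
next
  case (2 \<pi>)
  then show ?case by simp
next
  case (3 \<pi> \<rho> \<pi>s)
  let ?R = "meet_list (\<rho> # \<pi>s)"
  have IH: "finite ?R" "card ?R \<le> M ^ length (\<rho> # \<pi>s)" using 3 by auto
  have f\<pi>: "finite \<pi>" "card \<pi> \<le> M" using 3 by auto
  have sub: "meet \<pi> ?R \<subseteq> (\<lambda>(B,B'). B \<inter> B') ` (\<pi> \<times> ?R)" unfolding meet_def by auto
  have fin: "finite ((\<lambda>(B,B'). B \<inter> B') ` (\<pi> \<times> ?R))" using IH f\<pi> by auto
  have "card (meet \<pi> ?R) \<le> card ((\<lambda>(B,B'). B \<inter> B') ` (\<pi> \<times> ?R))" using card_mono[OF fin sub] .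
  also have "\<dots> \<le> card (\<pi> \<times> ?R)" by (rule card_image_le) (use IH f\<pi> in auto)
  also have "\<dots> = card \<pi> * card ?R" by (simp add: card_cartesian_product)
  also have "\<dots> \<le> M * M ^ length (\<rho> # \<pi>s)" using IH f\<pi> by (intro mult_mono) auto
  finally show ?case using finite_subset[OF sub fin] by simp
qed

lemma part_fin:
  fixes D :: "'s asd"
  assumes asd: "is_asd D" and p: "\<pi> \<in> parts D" and ne: "states D \<noteq> {}"
  shows "finite \<pi> \<and> card \<pi> \<ge> 1"
proof -
  have part: "partition_on (states D) \<pi>" using asd p by (auto simp: is_asd_def)
  have fin: "finite \<pi>"
  proof (rule finite_subset)
    show "\<pi> \<subseteq> Pow (states D)" using partition_onD1[OF part] by auto
    show "finite (Pow (states D))" using asd by (simp add: is_asd_def)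
  qed
  have "\<pi> \<noteq> {}" using partition_onD1[OF part] ne by auto
  then show ?thesis using fin by (simp add: Suc_leI card_gt_0_iff)
qed

theorem proposition5:
  fixes D :: "'s asd"
  assumes "is_asd D" and "states D \<noteq> {}" and "parts D \<noteq> {}"
  shows "ereal (state_complexity D) \<le> perf_index D * ereal (capacity D)"
proof -
  note asd = assms(1)
  define S where "S = states D"
  have finS: "finite S" using asd by (simp add: is_asd_def S_def)
  define Cs where "Cs = {log 2 (real m) | m. m \<ge> 1 \<and> asd_le (Cdev m) D}"
  have "Cs \<subseteq> (\<lambda>m. log 2 (real m)) ` {1..card S}"
    unfolding Cs_def S_def using Cm_le_card[OF asd] by auto
  then have finC: "finite Cs" by (rule finite_subset) simp
  obtain \<pi>0 where p0: "\<pi>0 \<in> parts D" using assms(3) by blast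
  have mem: "\<And>\<pi>. \<pi> \<in> parts D \<Longrightarrow> log 2 (real (card \<pi>)) \<in> Cs"
    unfolding Cs_def using part_Cm[OF asd] part_fin[OF asd _ assms(2)] by blast
  then have neC: "Cs \<noteq> {}" using p0 by blast
  have "capacity D \<in> Cs" unfolding capacity_def Cs_def[symmetric] using Max_in[OF finC neC] .
  then obtain M where M: "M \<ge> 1" "asd_le (Cdev M) D" "capacity D = log 2 (real M)"
    unfolding Cs_def by blast
  have cardle: "card \<pi> \<le> M" if p: "\<pi> \<in> parts D" for \<pi>
  proof -
    have "log 2 (real (card \<pi>)) \<le> capacity D" unfolding capacity_def Cs_def[symmetric]
      using Max_ge[OF finC mem[OF p]] .
    then have "log 2 (real (card \<pi>)) \<le> log 2 (real M)" using M by simp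
    moreover have "card \<pi> \<ge> 1" using part_fin[OF asd p assms(2)] by simp
    ultimately show ?thesis using M(1) by simp
  qed
  show ?thesis
  proof (cases "M = 1")
    case True
    obtain s0 where s0: "s0 \<in> S" using assms(2) S_def by auto
    have triv: "\<pi> = {S}" if p: "\<pi> \<in> parts D" for \<pi>
    proof -
      have "card \<pi> = 1" using cardle[OF p] True part_fin[OF asd p assms(2)] by simp
      then obtain B where "\<pi> = {B}" by (auto simp: card_Suc_eq)
      moreover have "\<Union>\<pi> = S" using asd p partition_onD1 by (fastforce simp: is_asd_def S_def)
      ultimately show ?thesis by simp
    qed
    have ref: "\<forall>\<pi>\<in>parts D. pullback (states D) (\<lambda>_. 0::nat) (pullback {0} (\<lambda>_. s0) \<pi>) \<preceq>\<^sub>P \<pi>"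
    proof
      fix \<pi> assume p: "\<pi> \<in> parts D"
      show "pullback (states D) (\<lambda>_. 0::nat) (pullback {0} (\<lambda>_. s0) \<pi>) \<preceq>\<^sub>P \<pi>"
        unfolding refines_def using triv[OF p] by (auto simp: pullback_def S_def)
    qed
    have "is_asd ({0::nat}, pullback {0} (\<lambda>_. s0) ` parts D) \<and>
          asd_equiv ({0::nat}, pullback {0} (\<lambda>_. s0) ` parts D) D"
      by (rule relabel_equiv[OF asd _ _ _ ref]) (use s0 S_def in auto)
    then have "state_complexity D \<le> log 2 (real (card (states ({0::nat}, pullback {0} (\<lambda>_. s0) ` parts D))))"
      using sc_le assms(2) by blast
    then have "state_complexity D \<le> 0" by (simp add: states_def)
    moreover have "capacity D = 0" using M True by simp
    ultimately show ?thesis by (simp add: zero_ereal_def[symmetric])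
  next
    case False
    then have M2: "M \<ge> 2" using M(1) by simp
    have cpos: "capacity D > 0" using M M2 by simp
    show ?thesis
    proof (cases "\<exists>k\<ge>1. perfect (power_dev D k)")
      case False
      then have "perf_index D = \<infinity>" by (simp add: perf_index_def)
      then show ?thesis using cpos by simp
    next
      case True
      define k where "k = (LEAST k. k \<ge> 1 \<and> perfect (power_dev D k))"
      have pk: "perf_index D = ereal (real k)" using True by (simp add: perf_index_def k_def)
      have kk: "k \<ge> 1 \<and> perfect (power_dev D k)" unfolding k_def
        using True by (rule LeastI_ex[where P="\<lambda>k. k \<ge> 1 \<and> perfect (power_dev D k)"]) 
      then obtain \<pi>s where \<pi>s: "length \<pi>s = k" "set \<pi>s \<subseteq> parts D" "(\<lambda>s. {s}) ` S = meet_list \<pi>s"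
        by (auto simp: perfect_def power_dev_def states_def parts_def S_def)
      have "\<pi>s \<noteq> []" using \<pi>s(1) kk by auto
      moreover have "\<forall>\<pi>\<in>set \<pi>s. finite \<pi> \<and> card \<pi> \<le> M"
        using \<pi>s(2) cardle part_fin[OF asd _ assms(2)] by blast
      ultimately have "card (meet_list \<pi>s) \<le> M ^ k" using meet_list_card \<pi>s(1) by blast
      moreover have "card ((\<lambda>s. {s}) ` S) = card S" by (rule card_image) (simp add: inj_on_def)
      ultimately have cS: "card S \<le> M ^ k" using \<pi>s(3) by simp
      obtain h where h: "bij_betw h {0..<card S} S" using ex_bij_betw_nat_finite[OF finS] by blast
      define \<psi> where "\<psi> = inv_into {0..<card S} h"
      have ref: "\<forall>\<pi>\<in>parts D. pullback (states D) \<psi> (pullback {0..<card S} h \<pi>) \<preceq>\<^sub>P \<pi>"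
      proof
        fix \<pi> assume p: "\<pi> \<in> parts D"
        show "pullback (states D) \<psi> (pullback {0..<card S} h \<pi>) \<preceq>\<^sub>P \<pi>"
          unfolding refines_def
        proof
          fix C assume "C \<in> pullback (states D) \<psi> (pullback {0..<card S} h \<pi>)"
          then obtain B where B: "B \<in> \<pi>" "C = {x\<in>S. \<psi> x \<in> {y\<in>{0..<card S}. h y \<in> B}}"
            unfolding pullback_def S_def by auto
          have "C \<subseteq> B"
          proof
            fix x assume "x \<in> C"
            then have "x \<in> S" "h (\<psi> x) \<in> B" using B by auto
            moreover have "h (\<psi> x) = x" unfolding \<psi>_def using h \<open>x \<in> S\<close>
              by (simp add: bij_betw_inv_into_right)
            ultimately show "x \<in> B" by simp
          qed
          then show "\<exists>B'\<in>\<pi>. C \<subseteq> B'" using B by blast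
        qed
      qed
      have "\<psi> \<in> states D \<rightarrow> {0..<card S}" unfolding \<psi>_def S_def[symmetric]
        using h by (auto intro: inv_into_into simp: bij_betw_def)
      moreover have "h \<in> {0..<card S} \<rightarrow> states D" using h by (auto simp: bij_betw_def S_def)
      ultimately have "is_asd ({0..<card S}, pullback {0..<card S} h ` parts D) \<and>
          asd_equiv ({0..<card S}, pullback {0..<card S} h ` parts D) D"
        by (intro relabel_equiv[OF asd _ _ _ ref]) auto
      then have "state_complexity D \<le> log 2 (real (card (states ({0..<card S}, pullback {0..<card S} h ` parts D))))"
        using sc_le assms(2) by blast
      then have "state_complexity D \<le> log 2 (real (card S))" by (simp add: states_def)
      also have "\<dots> \<le> log 2 (real (M ^ k))"
      proof -
        have "card S \<ge> 1" using finS assms(2) S_def by (simp add: Suc_leI card_gt_0_iff)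
        moreover have "real (card S) \<le> real (M ^ k)" using cS by linarith
        ultimately show ?thesis using M(1) by (subst log_le_cancel_iff) auto
      qed
      also have "\<dots> = real k * log 2 (real M)" using M(1) by (simp add: log_nat_power)
      finally show ?thesis using pk M(3) by simp
    qed
  qed
qed

end
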